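(* Consider the ReLU network with skipped connections, training data $(x^{(i)},y^{(i)})_{i=1}^T$ and cost $C=\frac12\sum_{i=1}^T\|F(x^{(i)})-y^{(i)}\|^2$. Suppose there exists $l\in[\kappa]$ such that (i) the skipped features $\chi^l(x^{(1)}),\dots,\chi^l(x^{(T)})\in\mathbb R^{s_l}$ are linearly independent, and (ii) $\tilde\Upsilon^{l-1}(x^{(i)})\tilde\Lambda^l(x^{(i)})\in\mathbb R^{d_0\times d_{l-1}}$ has full row rank for every $i\in[T]$. Then $\nabla_{\tilde S^l}C=0$ if and only if $F(x^{(i)})=y^{(i)}$ for all $i\in[T]$ (i.e. $C=0$).
   Context: $\otimes$ is the Kronecker product, $\sigma(t)=\max(t,0)$ entrywise, $[n]=\{1,\dots,n\}$. Network with skipped connections on inputs $x\in\mathbb R^{d_0}$, with layer dimensions $d_0,\dots,d_\kappa$ and skip dimensions $s_1,\dots,s_\kappa$: given matrices $E^l\in\mathbb R^{d_{l-1}\times d_l}$, $D^l\in\mathbb R^{d_{l-1}\times d_l}$, $S^l\in\mathbb R^{d_{l-1}\times s_l}$, $\tilde S^l\in\mathbb R^{d_{l-1}\times s_l}$ ($l\in[\kappa]$), define $\xi^0=x$, $\xi^l=\sigma(E^{l\top}\xi^{l-1})$, $\chi^l=\sigma(S^{l\top}\xi^{l-1})$, $\tilde\xi^\kappa=\xi^\kappa$, $\tilde\xi^{l-1}=\sigma(D^l\tilde\xi^l+\tilde S^l\chi^l)$ (decoder pre-activation at layer $l$: $D^l\tilde\xi^l+\tilde S^l\chi^l$), $F(x)=\tilde\xi^0$.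 $\tilde\Lambda^l(x)\in\mathbb R^{d_{l-1}\times d_{l-1}}$ is diagonal with $i$-th entry $1$ if the $i$-th decoder pre-activation at layer $l$ is $>0$ and $0$ otherwise; $\tilde\Upsilon^0=I_{d_0}$, $\tilde\Upsilon^l(x)=\tilde\Upsilon^{l-1}(x)\tilde\Lambda^l(x)D^l$. The gradient with respect to $\tilde S^l$ (treated as a free matrix) is defined by the chain-rule expression $$\nabla_{\tilde S^l}C:=\sum_{i=1}^T\big(\chi^l(x^{(i)})\otimes I_{d_{l-1}}\big)\,\tilde\Lambda^l(x^{(i)})\,\tilde\Upsilon^{l-1}(x^{(i)})^\top\big(F(x^{(i)})-y^{(i)}\big)\in\mathbb R^{s_ld_{l-1}},$$ which coincides with the true gradient with respect to $\mathrm{vec}(\tilde S^l)$ whenever no decoder pre-activation at layers $1,\dots,l$ vanishes at any training input. *)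

theory Defs
  imports "Jordan_Normal_Form.Matrix" "Jordan_Normal_Form.DL_Rank"
begin

definition relu :: "real vec \<Rightarrow> real vec" where
  "relu v = map_vec (\<lambda>t. max t 0) v"

definition kron :: "real mat \<Rightarrow> real mat \<Rightarrow> real mat" where
  "kron A B = mat (dim_row A * dim_row B) (dim_col A * dim_col B)
     (\<lambda>(i,j). A $$ (i div dim_row B, j div dim_col B) * B $$ (i mod dim_row B, j mod dim_col B))"

fun enc :: "(nat \<Rightarrow> real mat) \<Rightarrow> real vec \<Rightarrow> nat \<Rightarrow> real vec" where
  "enc E x 0 = x"
| "enc E x (Suc l) = relu (transpose_mat (E (Suc l)) *\<^sub>v enc E x l)"

definition skipf :: "(nat \<Rightarrow> real mat) \<Rightarrow> (nat \<Rightarrow> real mat) \<Rightarrow> real vec \<Rightarrow> nat \<Rightarrow> real vec" where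
  "skipf E S x l = relu (transpose_mat (S l) *\<^sub>v enc E x (l - 1))"

text \<open>dec_aux ... m = tilde xi^(kappa - m)(x).\<close>
fun dec_aux :: "nat \<Rightarrow> (nat \<Rightarrow> real mat) \<Rightarrow> (nat \<Rightarrow> real mat) \<Rightarrow> (nat \<Rightarrow> real mat)
    \<Rightarrow> (nat \<Rightarrow> real mat) \<Rightarrow> real vec \<Rightarrow> nat \<Rightarrow> real vec" where
  "dec_aux \<kappa> E D S St x 0 = enc E x \<kappa>"
| "dec_aux \<kappa> E D S St x (Suc m) =
     relu (D (\<kappa> - m) *\<^sub>v dec_aux \<kappa> E D S St x m + St (\<kappa> - m) *\<^sub>v skipf E S x (\<kappa> - m))"

definition dec :: "nat \<Rightarrow> (nat \<Rightarrow> real mat) \<Rightarrow> (nat \<Rightarrow> real mat) \<Rightarrow> (nat \<Rightarrow> real mat)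
    \<Rightarrow> (nat \<Rightarrow> real mat) \<Rightarrow> real vec \<Rightarrow> nat \<Rightarrow> real vec" where
  "dec \<kappa> E D S St x l = dec_aux \<kappa> E D S St x (\<kappa> - l)"

definition net :: "nat \<Rightarrow> (nat \<Rightarrow> real mat) \<Rightarrow> (nat \<Rightarrow> real mat) \<Rightarrow> (nat \<Rightarrow> real mat)
    \<Rightarrow> (nat \<Rightarrow> real mat) \<Rightarrow> real vec \<Rightarrow> real vec" where
  "net \<kappa> E D S St x = dec \<kappa> E D S St x 0"

definition preact :: "nat \<Rightarrow> (nat \<Rightarrow> real mat) \<Rightarrow> (nat \<Rightarrow> real mat) \<Rightarrow> (nat \<Rightarrow> real mat)
    \<Rightarrow> (nat \<Rightarrow> real mat) \<Rightarrow> real vec \<Rightarrow> nat \<Rightarrow> real vec" where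
  "preact \<kappa> E D S St x l = D l *\<^sub>v dec \<kappa> E D S St x l + St l *\<^sub>v skipf E S x l"

definition Lam :: "nat \<Rightarrow> (nat \<Rightarrow> real mat) \<Rightarrow> (nat \<Rightarrow> real mat) \<Rightarrow> (nat \<Rightarrow> real mat)
    \<Rightarrow> (nat \<Rightarrow> real mat) \<Rightarrow> real vec \<Rightarrow> nat \<Rightarrow> real mat" where
  "Lam \<kappa> E D S St x l =
     (let p = preact \<kappa> E D S St x l
      in mat (dim_vec p) (dim_vec p) (\<lambda>(i,j). if i = j \<and> p $ i > 0 then 1 else 0))"

fun Ups :: "nat \<Rightarrow> nat \<Rightarrow> (nat \<Rightarrow> real mat) \<Rightarrow> (nat \<Rightarrow> real mat) \<Rightarrow> (nat \<Rightarrow> real mat)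
    \<Rightarrow> (nat \<Rightarrow> real mat) \<Rightarrow> real vec \<Rightarrow> nat \<Rightarrow> real mat" where
  "Ups d0 \<kappa> E D S St x 0 = 1\<^sub>m d0"
| "Ups d0 \<kappa> E D S St x (Suc l) =
     Ups d0 \<kappa> E D S St x l * Lam \<kappa> E D S St x (Suc l) * D (Suc l)"

text \<open>Chain-rule gradient w.r.t. tilde S^l, a vector in R^(s_l d_{l-1}).\<close>
definition grad_St :: "nat \<Rightarrow> nat \<Rightarrow> (nat \<Rightarrow> real mat) \<Rightarrow> (nat \<Rightarrow> real mat) \<Rightarrow> (nat \<Rightarrow> real mat)
    \<Rightarrow> (nat \<Rightarrow> real mat) \<Rightarrow> nat \<Rightarrow> (nat \<Rightarrow> real vec) \<Rightarrow> (nat \<Rightarrow> real vec) \<Rightarrow> nat \<Rightarrow> real vec" where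
  "grad_St d0 \<kappa> E D S St T xs ys l =
     vec (dim_col (S l) * dim_row (S l))
       (\<lambda>k. \<Sum>i\<in>{1..T}.
          (kron (mat_of_cols (dim_col (S l)) [skipf E S (xs i) l]) (1\<^sub>m (dim_row (S l)))
            *\<^sub>v (Lam \<kappa> E D S St (xs i) l
                 *\<^sub>v (transpose_mat (Ups d0 \<kappa> E D S St (xs i) (l - 1))
                      *\<^sub>v (net \<kappa> E D S St (xs i) - ys i)))) $ k)"

definition cost :: "nat \<Rightarrow> (nat \<Rightarrow> real mat) \<Rightarrow> (nat \<Rightarrow> real mat) \<Rightarrow> (nat \<Rightarrow> real mat)
    \<Rightarrow> (nat \<Rightarrow> real mat) \<Rightarrow> nat \<Rightarrow> (nat \<Rightarrow> real vec) \<Rightarrow> (nat \<Rightarrow> real vec) \<Rightarrow> real" where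
  "cost \<kappa> E D S St T xs ys =
     (1/2) * (\<Sum>i\<in>{1..T}. (net \<kappa> E D S St (xs i) - ys i) \<bullet> (net \<kappa> E D S St (xs i) - ys i))"

definition lin_indep_family :: "nat \<Rightarrow> nat \<Rightarrow> (nat \<Rightarrow> real vec) \<Rightarrow> bool" where
  "lin_indep_family n T v \<longleftrightarrow>
     (\<forall>c :: nat \<Rightarrow> real.
        (\<forall>k<n. (\<Sum>i\<in>{1..T}. c i * v i $ k) = 0) \<longrightarrow> (\<forall>i\<in>{1..T}. c i = 0))"

end

theory Submission imports Defs begin

lemma (in vec_space) full_rank_orth:
  assumes A: "A \<in> carrier_mat n nc" and rk: "rank A = n" and r: "r \<in> carrier_vec n"
    and orth: "\<And>j. j < nc \<Longrightarrow> r \<bullet> col A j = 0"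
  shows "r \<bullet> r = 0"
proof -
  obtain S where S: "maximal S (\<lambda>T. T \<subseteq> set (cols A) \<and> lin_indpt T)"
    using maximal_exists[of "(\<lambda>T. T \<subseteq> set (cols A) \<and> lin_indpt T)" "card (set (cols A))" "{}"]
    by (meson List.finite_set card_mono empty_iff empty_subsetI finite_lin_indpt2 rev_finite_subset)
  have cardS: "card S = n" using rank_card_indpt[OF A S] rk by simp
  have Ssub: "S \<subseteq> set (cols A)" "lin_indpt S" using S unfolding maximal_def by auto
  have Scar: "S \<subseteq> carrier_vec n" using Ssub(1) cols_dim A by blast
  have finS: "finite S" using Ssub(1) finite_subset by blast
  have "basis S"
    by (rule dim_li_is_basis) (use finS Scar Ssub cardS dim_is_n in auto)
  then have spanS: "span S = carrier_vec n" unfolding basis_def by auto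
  have "r \<in> orthogonal_complement S"
    unfolding orthogonal_complement_def
  proof (safe)
    fix y assume "y \<in> S"
    then have "y \<in> set (cols A)" using Ssub(1) by blast
    then obtain j where "j < length (cols A)" "y = cols A ! j" by (auto simp: in_set_conv_nth)
    then have "j < nc" "y = col A j" using A by auto
    then show "r \<bullet> y = 0" using orth by simp
  qed (use r in auto)
  then have "r \<in> orthogonal_complement (span S)" using Scar by simp
  then show ?thesis using spanS r unfolding orthogonal_complement_def by auto
qed


lemma kron_entry:
  fixes c w :: "real vec"
  assumes c: "c \<in> carrier_vec p" and w: "w \<in> carrier_vec q" and k: "k < p * q"
  shows "(kron (mat_of_cols p [c]) (1\<^sub>m q) *\<^sub>v w) $ k = c $ (k div q) * w $ (k mod q)"
proof -
  have q: "q > 0" using k by (cases q) auto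
  have kd: "k div q < p" using k by (simp add: less_mult_imp_div_less)
  have km: "k mod q < q" using q by simp
  have "(kron (mat_of_cols p [c]) (1\<^sub>m q) *\<^sub>v w) $ k
      = (\<Sum>j<q. (c $ (k div q) * (if k mod q = j then 1 else 0)) * w $ j)"
    using k w kd km q unfolding kron_def
    by (auto simp: mult_mat_vec_def scalar_prod_def row_def mat_of_cols_def atLeast0LessThan
        intro!: sum.cong)
  also have "\<dots> = (\<Sum>j<q. if j = k mod q then c $ (k div q) * w $ j else 0)"
    by (rule sum.cong) auto
  also have "\<dots> = c $ (k div q) * w $ (k mod q)"
    using km by simp
  finally show ?thesis .
qed

lemma dim_net:
  assumes "\<kappa> \<ge> 1"
  shows "dim_vec (net \<kappa> E D S St x) = dim_row (St 1)"
proof -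
  obtain k where k: "\<kappa> = Suc k" using assms by (cases \<kappa>) auto
  show ?thesis unfolding net_def dec_def using k by (simp add: relu_def)
qed

lemma Lam_carrier:
  "Lam \<kappa> E D S St x l \<in> carrier_mat (dim_row (St l)) (dim_row (St l))"
  unfolding Lam_def Let_def preact_def by simp

lemma Lam_transpose:
  "transpose_mat (Lam \<kappa> E D S St x l) = Lam \<kappa> E D S St x l"
  unfolding Lam_def Let_def by (rule eq_matI) auto

lemma Ups_carrier:
  assumes dimD: "\<And>j. j \<in> {1..\<kappa>} \<Longrightarrow> D j \<in> carrier_mat (d (j - 1)) (d j)"
  shows "j \<le> \<kappa> \<Longrightarrow> Ups (d 0) \<kappa> E D S St x j \<in> carrier_mat (d 0) (d j)"
proof (induction j)
  case 0 then show ?case by simp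
next
  case (Suc j)
  have "D (Suc j) \<in> carrier_mat (d j) (d (Suc j))" using dimD[of "Suc j"] Suc.prems by auto
  then show ?case using Suc by auto
qed

theorem theorem2:
  fixes \<kappa> T :: nat and d s :: "nat \<Rightarrow> nat"
    and E D S St :: "nat \<Rightarrow> real mat"
    and xs ys :: "nat \<Rightarrow> real vec"
    and l :: nat
  assumes dimE: "\<And>j. j \<in> {1..\<kappa>} \<Longrightarrow> E j \<in> carrier_mat (d (j - 1)) (d j)"
    and dimD: "\<And>j. j \<in> {1..\<kappa>} \<Longrightarrow> D j \<in> carrier_mat (d (j - 1)) (d j)"
    and dimS: "\<And>j. j \<in> {1..\<kappa>} \<Longrightarrow> S j \<in> carrier_mat (d (j - 1)) (s j)"
    and dimSt: "\<And>j. j \<in> {1..\<kappa>} \<Longrightarrow> St j \<in> carrier_mat (d (j - 1)) (s j)"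
    and dimx: "\<And>i. i \<in> {1..T} \<Longrightarrow> xs i \<in> carrier_vec (d 0)"
    and dimy: "\<And>i. i \<in> {1..T} \<Longrightarrow> ys i \<in> carrier_vec (d 0)"
    and l: "l \<in> {1..\<kappa>}"
    and indep: "lin_indep_family (s l) T (\<lambda>i. skipf E S (xs i) l)"
    and fullrank: "\<And>i. i \<in> {1..T} \<Longrightarrow>
        vec_space.rank (d 0) (Ups (d 0) \<kappa> E D S St (xs i) (l - 1) * Lam \<kappa> E D S St (xs i) l) = d 0"
  shows "grad_St (d 0) \<kappa> E D S St T xs ys l = 0\<^sub>v (s l * d (l - 1))
     \<longleftrightarrow> (\<forall>i\<in>{1..T}. net \<kappa> E D S St (xs i) = ys i)"
proof -
  have l1: "1 \<le> l" "l \<le> \<kappa>" using l by auto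
  define m where "m = d (l - 1)"
  define sl where "sl = s l"
  have Sl: "S l \<in> carrier_mat m sl" using dimS[OF l] unfolding m_def sl_def .
  have Stl: "St l \<in> carrier_mat m sl" using dimSt[OF l] unfolding m_def sl_def .
  have St1: "St 1 \<in> carrier_mat (d 0) (s 1)" using dimSt[of 1] l1 by auto
  define r where "r i = net \<kappa> E D S St (xs i) - ys i" for i
  define U where "U i = Ups (d 0) \<kappa> E D S St (xs i) (l - 1)" for i
  define L where "L i = Lam \<kappa> E D S St (xs i) l" for i
  define w where "w i = L i *\<^sub>v (transpose_mat (U i) *\<^sub>v r i)" for i
  define chi where "chi i = skipf E S (xs i) l" for i
  have netdim: "dim_vec (net \<kappa> E D S St (xs i)) = d 0" for i
    using dim_net[of \<kappa> E D S St "xs i"] l1 St1 by auto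
  have rdim: "r i \<in> carrier_vec (d 0)" if i: "i \<in> {1..T}" for i
  proof -
    have "dim_vec (ys i) = d 0" using carrier_vecD[OF dimy[OF i]] .
    then show ?thesis unfolding r_def carrier_vec_def by simp
  qed
  have Ucar: "U i \<in> carrier_mat (d 0) m" for i
    unfolding U_def m_def by (rule Ups_carrier[of \<kappa> D d, OF dimD]) (use l1 in auto)
  have Lcar: "L i \<in> carrier_mat m m" for i
    using Lam_carrier[of \<kappa> E D S St "xs i" l] Stl unfolding L_def by auto
  have wdim: "w i \<in> carrier_vec m" for i
    using Lcar[of i] unfolding w_def carrier_vec_def carrier_mat_def by simp
  have chidim: "chi i \<in> carrier_vec sl" for i
    using Sl unfolding chi_def skipf_def relu_def carrier_vec_def carrier_mat_def by simp
  have grad_eq: "grad_St (d 0) \<kappa> E D S St T xs ys l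
      = vec (sl * m) (\<lambda>k. \<Sum>i\<in>{1..T}. chi i $ (k div m) * w i $ (k mod m))"
  proof (rule eq_vecI)
    fix k assume "k < dim_vec (vec (sl * m) (\<lambda>k. \<Sum>i\<in>{1..T}. chi i $ (k div m) * w i $ (k mod m)))"
    then have k: "k < sl * m" by simp
    show "grad_St (d 0) \<kappa> E D S St T xs ys l $ k = vec (sl * m) (\<lambda>k. \<Sum>i\<in>{1..T}. chi i $ (k div m) * w i $ (k mod m)) $ k"
      unfolding grad_St_def using Sl k
      apply simp
      apply (rule sum.cong[OF refl])
      using kron_entry[OF chidim wdim k]
      by (simp add: chi_def w_def L_def U_def r_def)
  qed (use Sl in \<open>simp add: grad_St_def\<close>)
  show ?thesis
  proof
    assume H: "grad_St (d 0) \<kappa> E D S St T xs ys l = 0\<^sub>v (s l * d (l - 1))"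
    have coef: "(\<Sum>i\<in>{1..T}. chi i $ a * w i $ b) = 0" if a: "a < sl" and b: "b < m" for a b
    proof -
      have k: "a * m + b < sl * m"
      proof -
        have "a * m + b < a * m + m" using b by simp
        also have "\<dots> = Suc a * m" by simp
        also have "\<dots> \<le> sl * m" using a by (intro mult_right_mono) auto
        finally show ?thesis .
      qed
      have "vec (sl * m) (\<lambda>k. \<Sum>i\<in>{1..T}. chi i $ (k div m) * w i $ (k mod m)) $ (a * m + b) = 0"
        using H grad_eq k unfolding m_def sl_def by simp
      moreover have "(a * m + b) div m = a" "(a * m + b) mod m = b" using b by auto
      ultimately show ?thesis using k by simp
    qed
    have w0: "w i $ b = 0" if i: "i \<in> {1..T}" and b: "b < m" for i b
    proof -
      have "\<forall>a<s l. (\<Sum>i\<in>{1..T}. w i $ b * chi i $ a) = 0"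
        using coef b unfolding sl_def by (simp add: mult.commute)
      moreover have "(\<forall>a<s l. (\<Sum>i\<in>{1..T}. w i $ b * chi i $ a) = 0) \<longrightarrow> (\<forall>i\<in>{1..T}. w i $ b = 0)"
        using indep unfolding lin_indep_family_def chi_def
        by (rule spec[of _ "\<lambda>i. w i $ b"])
      ultimately have "\<forall>i\<in>{1..T}. w i $ b = 0" by blast
      then show ?thesis using i by blast
    qed
    show "\<forall>i\<in>{1..T}. net \<kappa> E D S St (xs i) = ys i"
    proof
      fix i assume i: "i \<in> {1..T}"
      have M: "U i * L i \<in> carrier_mat (d 0) m" by (rule mult_carrier_mat[OF Ucar Lcar])
      have Mt: "transpose_mat (U i * L i) *\<^sub>v r i = w i"
        unfolding w_def
        using Ucar[of i] Lcar[of i] rdim[OF i]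
        by (simp add: transpose_mult assoc_mult_mat_vec[of _ m m _ "d 0"] L_def Lam_transpose)
      have orth: "r i \<bullet> col (U i * L i) j = 0" if j: "j < m" for j
      proof -
        have "(transpose_mat (U i * L i) *\<^sub>v r i) $ j = col (U i * L i) j \<bullet> r i"
          using j carrier_matD[OF M] by (simp add: row_transpose)
        then have "col (U i * L i) j \<bullet> r i = 0" using Mt w0[OF i j] by simp
        then show ?thesis using comm_scalar_prod[of "r i" "d 0" "col (U i * L i) j"] rdim[OF i] M j
          by auto
      qed
      have "r i \<bullet> r i = 0"
        by (rule vec_space.full_rank_orth[OF M _ rdim[OF i] orth])
          (use fullrank[OF i] in \<open>simp_all add: U_def L_def\<close>)
      then have "r i = 0\<^sub>v (d 0)"
        using conjugate_square_eq_0_vec[OF rdim[OF i]]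
        by (simp add: scalar_prod_def)
      note r0 = this
      have yd: "dim_vec (ys i) = d 0" using carrier_vecD[OF dimy[OF i]] .
      show "net \<kappa> E D S St (xs i) = ys i"
      proof (rule eq_vecI)
        fix ia assume "ia < dim_vec (ys i)"
        then have ia: "ia < d 0" using yd by simp
        have "r i $ ia = 0" using r0 ia by simp
        then show "net \<kappa> E D S St (xs i) $ ia = ys i $ ia"
          using ia yd unfolding r_def by simp
      qed (use netdim yd in simp)
    qed
  next
    assume H: "\<forall>i\<in>{1..T}. net \<kappa> E D S St (xs i) = ys i"
    have "w i $ b = 0" if i: "i \<in> {1..T}" and b: "b < m" for i b
    proof -
      have "r i = 0\<^sub>v (d 0)" using H i dimy[OF i] unfolding r_def by simp
      then have z: "transpose_mat (U i) *\<^sub>v r i = 0\<^sub>v m"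
        using carrier_matD[OF Ucar[of i]] by (intro eq_vecI) (simp_all add: scalar_prod_def)
      show ?thesis using b carrier_matD[OF Lcar[of i]] unfolding w_def z
        by (simp add: scalar_prod_def)
    qed
    note wz = this
    show "grad_St (d 0) \<kappa> E D S St T xs ys l = 0\<^sub>v (s l * d (l - 1))"
      unfolding grad_eq
    proof (rule eq_vecI)
      fix k assume "k < dim_vec (0\<^sub>v (s l * d (l - 1)) :: real vec)"
      then have k: "k < sl * m" unfolding sl_def m_def by simp
      then have "m > 0" by (cases m) auto
      then have "k mod m < m" by simp
      then show "vec (sl * m) (\<lambda>k. \<Sum>i\<in>{1..T}. chi i $ (k div m) * w i $ (k mod m)) $ k = 0\<^sub>v (s l * d (l - 1)) $ k"
        using k wz unfolding sl_def m_def by simp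
    qed (simp add: sl_def m_def)
  qed
qed

end
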